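(* Let $n\geq 2$ and let $(x_i,y_i)_{i=1}^n$ be labeled examples with $x_i\in\mathbb{R}^d$, $y_i\in\{-1,+1\}$, $\max_i\|x_i\|\leq 1$. Let $X=[x_1,\dots,x_n]$, $\sigma^2\geq\frac{1}{n}\|X\|^2$ (spectral norm), $\lambda>0$, $b\in\{1,\dots,n\}$, and $\beta_b := 1+\frac{(b-1)(n\sigma^2-1)}{n-1}$. Define the primal objective $P(w) := \frac{1}{n}\sum_{i=1}^n\max\{0,1-y_i\langle w,x_i\rangle\}+\frac{\lambda}{2}\|w\|^2$ with minimizer $w^*$, the dual objective $D(\alpha) := -\frac{1}{2\lambda n^2}\alpha^\top Q\alpha + \frac{1}{n}\sum_{i=1}^n\alpha_i$ for $\alpha\in[0,1]^n$, where $Q_{ij} = y_iy_j\langle x_i,x_j\rangle$, and $w(\alpha) := \frac{1}{\lambda n}\sum_{i=1}^n\alpha_iy_ix_i$. Consider mini-batched SDCA: $\alpha^{(0)}=0$, and for $t=0,1,2,\dots$, draw $A_t$ uniformly at random among subsets of $\{1,\dots,n\}$ of cardinality $b$ (independently across iterations), and set $$\alpha^{(t+1)}_i = \alpha^{(t)}_i + \mathrm{clip}_{[-\alpha_i^{(t)},\,1-\alpha_i^{(t)}]}\left(\frac{\lambda n\big(1-y_i\langle w(\alpha^{(t)}),x_i\rangle\big)}{\beta_b}\right)\ \text{ for } i\in A_t,\qquad \alpha^{(t+1)}_j=\alpha^{(t)}_j\ \text{ for } j\notin A_t,$$ where $\mathrm{clip}_I$ denotes projection onto the interval $I$. Let $\epsilon>0$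 and let integers $t_0, T_0, T$ satisfy $$t_0\geq\max\Big\{0,\Big\lceil\frac{n}{b}\log\Big(\frac{2\lambda n}{\beta_b}\Big)\Big\rceil\Big\},\quad T_0\geq t_0+\frac{\beta_b}{b}\Big[\frac{4}{\lambda\epsilon}-\frac{2n}{\beta_b}\Big]_+,\quad T\geq T_0+\max\Big\{\Big\lceil\frac{n}{b}\Big\rceil,\frac{\beta_b}{b}\frac{1}{\lambda\epsilon}\Big\},$$ where $[z]_+=\max\{0,z\}$, and let $\bar\alpha := \frac{1}{T-T_0}\sum_{t=T_0}^{T-1}\alpha^{(t)}$. Then $$\mathbb{E}[P(w(\bar\alpha))] - P(w^* ) \leq \mathbb{E}[P(w(\bar\alpha)) - D(\bar\alpha)] \leq \epsilon.$$
   Context: $\|X\|$ is the spectral norm of $X$; the expectation is over the random mini-batches. *)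

theory Defs
  imports "HOL-Analysis.Analysis" "HOL-Probability.Probability"
begin

text \<open>Examples are indexed by a finite type 'n, so n = CARD('n); features live in a
  Euclidean space 'd (= R^d).\<close>

definition clip :: "real \<Rightarrow> real \<Rightarrow> real \<Rightarrow> real" where
  "clip lo hi z = max lo (min hi z)"

definition spectral_norm :: "('n::finite \<Rightarrow> 'd::euclidean_space) \<Rightarrow> real" where
  "spectral_norm x = onorm (\<lambda>a::real^'n. \<Sum>i\<in>UNIV. (a $ i) *\<^sub>R x i)"

definition primal :: "('n::finite \<Rightarrow> 'd::euclidean_space) \<Rightarrow> ('n \<Rightarrow> real) \<Rightarrow> real \<Rightarrow> 'd \<Rightarrow> real" where
  "primal x y lam w =
     (1 / real CARD('n)) * (\<Sum>i\<in>UNIV. max 0 (1 - y i * (w \<bullet> x i))) + lam / 2 * (norm w)\<^sup>2"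

definition dual :: "('n::finite \<Rightarrow> 'd::euclidean_space) \<Rightarrow> ('n \<Rightarrow> real) \<Rightarrow> real \<Rightarrow> ('n \<Rightarrow> real) \<Rightarrow> real" where
  "dual x y lam \<alpha> =
     - (1 / (2 * lam * (real CARD('n))\<^sup>2)) *
         (\<Sum>i\<in>UNIV. \<Sum>j\<in>UNIV. \<alpha> i * (y i * y j * (x i \<bullet> x j)) * \<alpha> j)
     + (1 / real CARD('n)) * (\<Sum>i\<in>UNIV. \<alpha> i)"

definition wmap :: "('n::finite \<Rightarrow> 'd::euclidean_space) \<Rightarrow> ('n \<Rightarrow> real) \<Rightarrow> real \<Rightarrow> ('n \<Rightarrow> real) \<Rightarrow> 'd" where
  "wmap x y lam \<alpha> = (1 / (lam * real CARD('n))) *\<^sub>R (\<Sum>i\<in>UNIV. (\<alpha> i * y i) *\<^sub>R x i)"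

text \<open>Mini-batch SDCA iterates, driven by a sequence of batches As t = A_t.\<close>
primrec sdca_iter :: "('n::finite \<Rightarrow> 'd::euclidean_space) \<Rightarrow> ('n \<Rightarrow> real) \<Rightarrow> real \<Rightarrow> real
    \<Rightarrow> (nat \<Rightarrow> 'n set) \<Rightarrow> nat \<Rightarrow> ('n \<Rightarrow> real)" where
  "sdca_iter x y lam beta As 0 = (\<lambda>_. 0)"
| "sdca_iter x y lam beta As (Suc t) =
     (\<lambda>i. let a = sdca_iter x y lam beta As t in
        if i \<in> As t
        then a i + clip (- a i) (1 - a i)
               (lam * real CARD('n) * (1 - y i * (wmap x y lam a \<bullet> x i)) / beta)
        else a i)"

definition batch_pmf :: "nat \<Rightarrow> ('n::finite) set pmf" where
  "batch_pmf b = pmf_of_set {A::'n set. card A = b}"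

definition schedule_pmf :: "nat \<Rightarrow> nat \<Rightarrow> (nat \<Rightarrow> ('n::finite) set) pmf" where
  "schedule_pmf b T = Pi_pmf {..<T} {} (\<lambda>_. batch_pmf b)"

definition alpha_bar :: "('n::finite \<Rightarrow> 'd::euclidean_space) \<Rightarrow> ('n \<Rightarrow> real) \<Rightarrow> real \<Rightarrow> real
    \<Rightarrow> nat \<Rightarrow> nat \<Rightarrow> (nat \<Rightarrow> 'n set) \<Rightarrow> ('n \<Rightarrow> real)" where
  "alpha_bar x y lam beta T0 T As =
     (\<lambda>i. (1 / real (T - T0)) * (\<Sum>t\<in>{T0..<T}. sdca_iter x y lam beta As t i))"

end

theory Submission
  imports Defs
begin


lemma card_superset_subsets:
  fixes I :: "'n::finite set"
  assumes "card I \<le> b"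
  shows "card {A::'n set. card A = b \<and> I \<subseteq> A} = (CARD('n) - card I) choose (b - card I)"
proof -
  have inj: "inj_on (\<lambda>B. B \<union> I) {B. B \<subseteq> - I \<and> card B = b - card I}"
    by (rule inj_onI) auto
  have eq: "{A::'n set. card A = b \<and> I \<subseteq> A} = (\<lambda>B. B \<union> I) ` {B. B \<subseteq> - I \<and> card B = b - card I}"
  proof (rule set_eqI, rule iffI)
    fix A assume A: "A \<in> {A::'n set. card A = b \<and> I \<subseteq> A}"
    then have "A = (A - I) \<union> I" "A - I \<subseteq> - I" "card (A - I) = b - card I"
      by (auto simp: card_Diff_subset)
    then show "A \<in> (\<lambda>B. B \<union> I) ` {B. B \<subseteq> - I \<and> card B = b - card I}" by blast
  next
    fix A assume "A \<in> (\<lambda>B. B \<union> I) ` {B. B \<subseteq> - I \<and> card B = b - card I}"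
    then obtain B where B: "B \<subseteq> - I" "card B = b - card I" "A = B \<union> I" by auto
    have "B \<inter> I = {}" using B(1) by auto
    then have "card A = card B + card I" using B(3) card_Un_disjoint[of B I] by simp
    with B assms show "A \<in> {A::'n set. card A = b \<and> I \<subseteq> A}" by auto
  qed
  have "card (- I) = CARD('n) - card I"
    by (simp add: Compl_eq_Diff_UNIV card_Diff_subset)
  then show ?thesis
    unfolding eq card_image[OF inj] by (simp add: n_subsets)
qed

lemma card_batches: "card {A::'n::finite set. card A = b} = CARD('n) choose b"
  using card_superset_subsets[of "{}" b] by simp

lemma card_with1:
  fixes i :: "'n::finite"
  assumes "1 \<le> b"
  shows "real (card {A::'n set. card A = b \<and> i \<in> A}) = real b / real CARD('n) * real (card {A::'n set. card A = b})"
proof -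
  have "card {A::'n set. card A = b \<and> i \<in> A} = (CARD('n) - 1) choose (b - 1)"
    using card_superset_subsets[of "{i}" b] assms by simp
  moreover have "b * (CARD('n) choose b) = CARD('n) * ((CARD('n) - 1) choose (b - 1))"
    using times_binomial_minus1_eq[of b "CARD('n)"] assms by simp
  ultimately have "real b * real (CARD('n) choose b) = real CARD('n) * real (card {A::'n set. card A = b \<and> i \<in> A})"
    by (metis of_nat_mult)
  then show ?thesis unfolding card_batches
    by (simp add: field_simps)
qed

lemma card_with2:
  fixes i j :: "'n::finite"
  assumes "1 \<le> b" "i \<noteq> j" "2 \<le> CARD('n)"
  shows "real (card {A::'n set. card A = b \<and> i \<in> A \<and> j \<in> A})
     = real b * (real b - 1) / (real CARD('n) * (real CARD('n) - 1)) * real (card {A::'n set. card A = b})"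
proof (cases "b = 1")
  case True
  have "{A::'n set. card A = b \<and> i \<in> A \<and> j \<in> A} = {}"
  proof (rule ccontr)
    assume "{A::'n set. card A = b \<and> i \<in> A \<and> j \<in> A} \<noteq> {}"
    then obtain A :: "'n set" where "card A = 1" "i \<in> A" "j \<in> A" using True by auto
    then show False using assms(2) by (auto simp: card_Suc_eq)
  qed
  then show ?thesis using True by simp
next
  case False
  let ?n = "CARD('n)"
  have c: "card {i, j} = 2" using assms by simp
  have "{A::'n set. card A = b \<and> i \<in> A \<and> j \<in> A} = {A::'n set. card A = b \<and> {i,j} \<subseteq> A}" by auto
  then have "card {A::'n set. card A = b \<and> i \<in> A \<and> j \<in> A} = (?n - 2) choose (b - 2)"
    using card_superset_subsets[of "{i,j}" b] assms False c by simp
  moreover have e1: "b * (?n choose b) = ?n * ((?n - 1) choose (b - 1))"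
    using times_binomial_minus1_eq[of b ?n] assms by simp
  moreover have e2: "(b - 1) * ((?n - 1) choose (b - 1)) = (?n - 1) * ((?n - 2) choose (b - 2))"
    using times_binomial_minus1_eq[of "b - 1" "?n - 1"] assms False by (simp add: diff_diff_add numeral_2_eq_2)
  ultimately have "b * (b - 1) * (?n choose b) = ?n * (?n - 1) * card {A::'n set. card A = b \<and> i \<in> A \<and> j \<in> A}"
  proof -
    have "b * (b - 1) * (?n choose b) = (b - 1) * (b * (?n choose b))" by simp
    also have "\<dots> = ?n * ((b - 1) * ((?n - 1) choose (b - 1)))" using e1 by simp
    also have "\<dots> = ?n * (?n - 1) * ((?n - 2) choose (b - 2))" using e2 by simp
    finally show ?thesis using \<open>card {A::'n set. card A = b \<and> i \<in> A \<and> j \<in> A} = (?n - 2) choose (b - 2)\<close> by simp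
  qed
  then have "real b * (real b - 1) * real (?n choose b) = real ?n * (real ?n - 1) * real (card {A::'n set. card A = b \<and> i \<in> A \<and> j \<in> A})"
  proof -
    have "real (b * (b - 1) * (?n choose b)) = real (?n * (?n - 1) * card {A::'n set. card A = b \<and> i \<in> A \<and> j \<in> A})"
      using \<open>b * (b - 1) * (?n choose b) = _\<close> by (simp only:)
    then show ?thesis using assms by (simp only: of_nat_mult of_nat_diff of_nat_1)
  qed
  then show ?thesis unfolding card_batches using assms by (simp add: field_simps)
qed

lemma batches_ne:
  assumes "b \<le> CARD('n::finite)" shows "{A::'n set. card A = b} \<noteq> {}"
proof -
  have "card {A::'n set. card A = b} \<noteq> 0" unfolding card_batches using assms by simp
  then show ?thesis by (metis card.empty)
qed

lemma sum_restrict_UNIV: "(\<Sum>i\<in>A. G i) = (\<Sum>i\<in>(UNIV::'n::finite set). if i \<in> A then G i else 0)"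
  by (simp add: sum.If_cases)

lemma dsum_restrict: "(\<Sum>i\<in>A. \<Sum>j\<in>A. f i j) = (\<Sum>i\<in>(UNIV::'n::finite set). \<Sum>j\<in>UNIV. if i \<in> A \<and> j \<in> A then f i j else 0)"
proof -
  have "(\<Sum>i\<in>A. \<Sum>j\<in>A. f i j) = (\<Sum>i\<in>(UNIV::'n set). if i \<in> A then (\<Sum>j\<in>A. f i j) else 0)"
    by (rule sum_restrict_UNIV)
  also have "\<dots> = (\<Sum>i\<in>UNIV. \<Sum>j\<in>UNIV. if i \<in> A \<and> j \<in> A then f i j else 0)"
  proof (rule sum.cong[OF refl])
    fix i show "(if i \<in> A then (\<Sum>j\<in>A. f i j) else 0) = (\<Sum>j\<in>UNIV. if i \<in> A \<and> j \<in> A then f i j else 0)"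
      by (cases "i \<in> A") (simp_all add: sum_restrict_UNIV[where A=A])
  qed
  finally show ?thesis .
qed

lemma sum_if_const: "finite S \<Longrightarrow> (\<Sum>A\<in>S. if Q A then c else 0) = c * real (card {A\<in>S. Q A})"
  for c :: real
  by (simp add: sum.If_cases Collect_conj_eq Int_commute inf_set_def)

lemma exp_batch1:
  fixes g :: "'n::finite \<Rightarrow> real"
  assumes "1 \<le> b" "b \<le> CARD('n)"
  shows "measure_pmf.expectation (batch_pmf b) (\<lambda>A. \<Sum>i\<in>A. g i) = real b / real CARD('n) * (\<Sum>i\<in>UNIV. g i)"
proof -
  let ?S = "{A::'n set. card A = b}"
  have "(\<Sum>A\<in>?S. \<Sum>i\<in>A. g i) = (\<Sum>A\<in>?S. \<Sum>i\<in>UNIV. if i \<in> A then g i else 0)"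
    by (simp add: sum_restrict_UNIV[where G=g])
  also have "\<dots> = (\<Sum>i\<in>UNIV. \<Sum>A\<in>?S. if i \<in> A then g i else 0)" by (rule sum.swap)
  also have "\<dots> = (\<Sum>i\<in>UNIV. g i * real (card {A \<in> ?S. i \<in> A}))"
    by (simp add: sum_if_const)
  also have "\<dots> = (\<Sum>i\<in>UNIV. g i * (real b / real CARD('n) * real (card ?S)))"
  proof (rule sum.cong[OF refl])
    fix i
    have "{A \<in> ?S. i \<in> A} = {A::'n set. card A = b \<and> i \<in> A}" by auto
    then show "g i * real (card {A \<in> ?S. i \<in> A}) = g i * (real b / real CARD('n) * real (card ?S))"
      using card_with1[OF assms(1), of i] by simp
  qed
  finally have e: "(\<Sum>A\<in>?S. \<Sum>i\<in>A. g i) = real b / real CARD('n) * real (card ?S) * (\<Sum>i\<in>UNIV. g i)"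
    by (simp add: sum_distrib_left sum_distrib_right mult_ac sum_divide_distrib)
  have "card ?S > 0" using batches_ne[OF assms(2)] by (simp add: card_gt_0_iff)
  then show ?thesis
    unfolding batch_pmf_def using batches_ne[OF assms(2)] by (auto simp add: integral_pmf_of_set e)
qed

lemma exp_batch2:
  fixes f :: "'n::finite \<Rightarrow> 'n \<Rightarrow> real"
  assumes "1 \<le> b" "b \<le> CARD('n)" "2 \<le> CARD('n)"
  defines "p2 \<equiv> real b * (real b - 1) / (real CARD('n) * (real CARD('n) - 1))"
  shows "measure_pmf.expectation (batch_pmf b) (\<lambda>A. \<Sum>i\<in>A. \<Sum>j\<in>A. f i j)
     = (real b / real CARD('n) - p2) * (\<Sum>i\<in>UNIV. f i i) + p2 * (\<Sum>i\<in>UNIV. \<Sum>j\<in>UNIV. f i j)"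
proof -
  let ?S = "{A::'n set. card A = b}"
  let ?C = "real (card ?S)"
  have "(\<Sum>A\<in>?S. \<Sum>i\<in>A. \<Sum>j\<in>A. f i j) = (\<Sum>A\<in>?S. \<Sum>i\<in>UNIV. \<Sum>j\<in>UNIV. if i \<in> A \<and> j \<in> A then f i j else 0)"
    by (simp add: dsum_restrict[where f=f])
  also have "\<dots> = (\<Sum>i\<in>UNIV. \<Sum>j\<in>UNIV. \<Sum>A\<in>?S. if i \<in> A \<and> j \<in> A then f i j else 0)"
    by (subst sum.swap) (simp add: sum.swap[of _ ?S])
  also have "\<dots> = (\<Sum>i\<in>UNIV. \<Sum>j\<in>UNIV. f i j * (?C * (p2 + (if j = i then real b / real CARD('n) - p2 else 0))))"
  proof (intro sum.cong refl)
    fix i j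
    have "(\<Sum>A\<in>?S. if i \<in> A \<and> j \<in> A then f i j else 0) = f i j * real (card {A::'n set. card A = b \<and> i \<in> A \<and> j \<in> A})"
      by (subst sum_if_const) (auto intro!: arg_cong[where f="\<lambda>X. f i j * real (card X)"])
    also have "\<dots> = f i j * (?C * (p2 + (if j = i then real b / real CARD('n) - p2 else 0)))"
    proof (cases "j = i")
      case True
      then show ?thesis using card_with1[OF assms(1), of i] by (simp add: mult_ac)
    next
      case False
      then show ?thesis using card_with2[OF assms(1), of i j] assms(3) unfolding p2_def by (simp add: mult_ac)
    qed
    finally show "(\<Sum>A\<in>?S. if i \<in> A \<and> j \<in> A then f i j else 0) = f i j * (?C * (p2 + (if j = i then real b / real CARD('n) - p2 else 0)))" .
  qed
  also have "\<dots> = ?C * ((real b / real CARD('n) - p2) * (\<Sum>i\<in>UNIV. f i i) + p2 * (\<Sum>i\<in>UNIV. \<Sum>j\<in>UNIV. f i j))"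
    by (simp add: algebra_simps sum.distrib sum_distrib_left sum_distrib_right if_distrib[of "\<lambda>x. _ * x"] sum.delta
        sum_subtractf sum_divide_distrib cong: if_cong)
  finally have e: "(\<Sum>A\<in>?S. \<Sum>i\<in>A. \<Sum>j\<in>A. f i j) = ?C * ((real b / real CARD('n) - p2) * (\<Sum>i\<in>UNIV. f i i) + p2 * (\<Sum>i\<in>UNIV. \<Sum>j\<in>UNIV. f i j))" .
  have "card ?S > 0" using batches_ne[OF assms(2)] by (simp add: card_gt_0_iff)
  then show ?thesis
    unfolding batch_pmf_def using batches_ne[OF assms(2)] by (auto simp add: integral_pmf_of_set e)
qed

lemma exp_mono_pmf:
  fixes p :: "'a pmf" and f g :: "'a \<Rightarrow> real"
  assumes "finite (set_pmf p)" "\<And>a. a \<in> set_pmf p \<Longrightarrow> f a \<le> g a"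
  shows "measure_pmf.expectation p f \<le> measure_pmf.expectation p g"
  using assms by (intro integral_mono_AE) (auto intro: integrable_measure_pmf_finite simp: AE_measure_pmf_iff)



lemma clip_opt:
  fixes lo hi v z q c :: real
  assumes "lo \<le> v" "v \<le> hi" "0 < c" "q = 2 * c * z"
  shows "q * v - c * v\<^sup>2 \<le> q * clip lo hi z - c * (clip lo hi z)\<^sup>2"
proof -
  have "\<bar>clip lo hi z - z\<bar> \<le> \<bar>v - z\<bar>"
    using assms(1,2) by (auto simp: clip_def max_def min_def abs_if)
  then have k: "(clip lo hi z - z)\<^sup>2 \<le> (v - z)\<^sup>2" by (simp add: abs_le_square_iff)
  have e: "q * t - c * t\<^sup>2 = c * z\<^sup>2 - c * (t - z)\<^sup>2" for t
    using assms(4) by (simp add: power2_eq_square algebra_simps)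
  show ?thesis unfolding e using mult_left_mono[OF k less_imp_le[OF assms(3)]] by simp
qed

lemma aux_c: "(lam::real) > 0 \<Longrightarrow> beta > 0 \<Longrightarrow> n > 0 \<Longrightarrow> X / n = 2 * (beta / (2 * lam * n\<^sup>2)) * (lam * n * X / beta)"
  by (simp add: field_simps power2_eq_square)

lemma spectral_bound:
  fixes x :: "'n::finite \<Rightarrow> 'd::euclidean_space"
  shows "(norm (\<Sum>i\<in>UNIV. c i *\<^sub>R x i))\<^sup>2 \<le> (spectral_norm x)\<^sup>2 * (\<Sum>i\<in>UNIV. (c i)\<^sup>2)"
proof -
  let ?L = "\<lambda>a::real^'n. \<Sum>i\<in>UNIV. (a $ i) *\<^sub>R x i"
  have lin: "linear ?L"
    unfolding linear_iff by (simp add: sum.distrib scaleR_add_left scaleR_sum_right)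
  then have bl: "bounded_linear ?L" by (simp add: linear_conv_bounded_linear)
  let ?v = "\<chi> i. c i"
  have "norm (?L ?v) \<le> onorm ?L * norm ?v" by (rule onorm[OF bl])
  then have "(norm (?L ?v))\<^sup>2 \<le> (onorm ?L * norm ?v)\<^sup>2" by (rule power_mono) simp
  moreover have "(norm ?v)\<^sup>2 = (\<Sum>i\<in>UNIV. (c i)\<^sup>2)"
    unfolding power2_norm_eq_inner by (simp add: inner_vec_def power2_eq_square)
  ultimately show ?thesis by (simp add: spectral_norm_def power_mult_distrib)
qed


locale sdca =
  fixes x :: "'n::finite \<Rightarrow> 'd::euclidean_space"
    and y :: "'n \<Rightarrow> real"
    and lam beta :: real
  assumes lam_pos: "lam > 0"
    and y_pm: "\<forall>i. y i \<in> {-1, 1}"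
begin

abbreviation "w \<equiv> wmap x y lam"
abbreviation "D \<equiv> dual x y lam"
abbreviation "P \<equiv> primal x y lam"

lemma N_pos: "real CARD('n) > 0" by simp

lemma y_sq: "y i * y i = 1" using y_pm[rule_format, of i] by auto

lemma y_abs: "\<bar>y i\<bar> = 1" using y_pm[rule_format, of i] by auto

lemma inner_w: "v \<bullet> w a = (1 / (lam * real CARD('n))) * (\<Sum>i\<in>UNIV. a i * y i * (v \<bullet> x i))"
  by (simp add: wmap_def inner_sum_right mult.assoc)

lemma dual_eq: "D a = - lam / 2 * (norm (w a))\<^sup>2 + (1 / real CARD('n)) * (\<Sum>i\<in>UNIV. a i)"
proof -
  have "(norm (w a))\<^sup>2 = w a \<bullet> w a" by (simp add: power2_norm_eq_inner)
  also have "\<dots> = (1 / (lam * real CARD('n)))\<^sup>2 * (\<Sum>i\<in>UNIV. \<Sum>j\<in>UNIV. a i * (y i * y j * (x i \<bullet> x j)) * a j)"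
    by (simp add: wmap_def inner_sum_left inner_sum_right sum_distrib_left power2_eq_square
        algebra_simps inner_commute)
  finally show ?thesis using lam_pos
    by (simp add: dual_def power2_eq_square field_simps)
qed


definition box :: "('n \<Rightarrow> real) \<Rightarrow> bool" where
  "box a \<longleftrightarrow> (\<forall>i. 0 \<le> a i \<and> a i \<le> 1)"

lemma inner_diff_sq: "(norm (v - u))\<^sup>2 = (norm v)\<^sup>2 - 2 * (v \<bullet> u) + (norm u)\<^sup>2" for v u :: 'd
  by (simp add: power2_norm_eq_inner inner_diff_left inner_diff_right inner_commute)

lemma norm_add_sq: "(norm (v + c *\<^sub>R u))\<^sup>2 = (norm v)\<^sup>2 + 2 * c * (v \<bullet> u) + c\<^sup>2 * (norm u)\<^sup>2" for v u :: 'd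
  unfolding power2_norm_eq_inner by (simp add: inner_add_left inner_add_right inner_commute power2_eq_square algebra_simps)

lemma sum_a_m: "(\<Sum>i\<in>UNIV. a i * (y i * (v \<bullet> x i))) = lam * real CARD('n) * (v \<bullet> w a)"
  using lam_pos by (simp add: inner_w mult.assoc)

lemma weak_duality:
  assumes "box a" shows "D a \<le> P v"
proof -
  let ?n = "real CARD('n)"
  have h1: "(\<Sum>i\<in>UNIV. a i * (1 - y i * (v \<bullet> x i))) \<le> (\<Sum>i\<in>UNIV. max 0 (1 - y i * (v \<bullet> x i)))"
  proof (rule sum_mono)
    fix i
    have "0 \<le> a i" "a i \<le> 1" using assms by (auto simp: box_def)
    then show "a i * (1 - y i * (v \<bullet> x i)) \<le> max 0 (1 - y i * (v \<bullet> x i))"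
      by (cases "1 - y i * (v \<bullet> x i) \<ge> 0") (auto intro: mult_left_le_one_le mult_nonneg_nonpos simp: mult_le_cancel_right1 max_def)
  qed
  have h2: "(\<Sum>i\<in>UNIV. a i * (1 - y i * (v \<bullet> x i))) = (\<Sum>i\<in>UNIV. a i) - lam * ?n * (v \<bullet> w a)"
    by (simp add: right_diff_distrib sum_subtractf sum_a_m)
  have h3: "0 \<le> (norm (v - w a))\<^sup>2" by simp
  have h4: "(\<Sum>i\<in>UNIV. a i) / ?n \<le> (\<Sum>i\<in>UNIV. max 0 (1 - y i * (v \<bullet> x i))) / ?n + lam * (v \<bullet> w a)"
    using h1 h2 by (simp add: field_simps)
  have h5: "lam * (v \<bullet> w a) \<le> lam / 2 * ((norm v)\<^sup>2 + (norm (w a))\<^sup>2)"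
  proof -
    have "2 * (v \<bullet> w a) \<le> (norm v)\<^sup>2 + (norm (w a))\<^sup>2" using h3 unfolding inner_diff_sq by simp
    from mult_left_mono[OF this less_imp_le[OF lam_pos]] show ?thesis by (simp add: field_simps)
  qed
  show ?thesis
    unfolding dual_eq primal_def using h4 h5 by (simp add: algebra_simps)
qed

definition uu :: "('n \<Rightarrow> real) \<Rightarrow> 'n \<Rightarrow> real" where
  "uu a i = (if y i * (w a \<bullet> x i) < 1 then 1 else 0)"

lemma gap_eq: "P (w a) - D a = (1 / real CARD('n)) * (\<Sum>i\<in>UNIV. (uu a i - a i) * (1 - y i * (w a \<bullet> x i)))"
proof -
  have e1: "uu a i * (1 - y i * (w a \<bullet> x i)) = max 0 (1 - y i * (w a \<bullet> x i))" for i
    by (simp add: uu_def max_def)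
  have "(\<Sum>i\<in>UNIV. (uu a i - a i) * (1 - y i * (w a \<bullet> x i)))
      = (\<Sum>i\<in>UNIV. max 0 (1 - y i * (w a \<bullet> x i))) - ((\<Sum>i\<in>UNIV. a i) - lam * real CARD('n) * (w a \<bullet> w a))"
  proof -
    have "(\<Sum>i\<in>UNIV. (uu a i - a i) * (1 - y i * (w a \<bullet> x i))) = (\<Sum>i\<in>UNIV. uu a i * (1 - y i * (w a \<bullet> x i))) - (\<Sum>i\<in>UNIV. a i * (1 - y i * (w a \<bullet> x i)))"
      by (simp add: left_diff_distrib sum_subtractf)
    moreover have "(\<Sum>i\<in>UNIV. a i * (1 - y i * (w a \<bullet> x i))) = (\<Sum>i\<in>UNIV. a i) - (\<Sum>i\<in>UNIV. a i * (y i * (w a \<bullet> x i)))"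
      by (simp add: right_diff_distrib sum_subtractf)
    ultimately show ?thesis using sum_a_m[of a "w a"] e1 by simp
  qed
  note eq = this
  show ?thesis
    unfolding dual_eq primal_def eq power2_norm_eq_inner using lam_pos by (simp add: field_simps)
qed

definition hstep :: "('n \<Rightarrow> real) \<Rightarrow> 'n \<Rightarrow> real" where
  "hstep a i = clip (- a i) (1 - a i) (lam * real CARD('n) * (1 - y i * (w a \<bullet> x i)) / beta)"

definition step :: "('n \<Rightarrow> real) \<Rightarrow> 'n set \<Rightarrow> ('n \<Rightarrow> real)" where
  "step a A = (\<lambda>i. if i \<in> A then a i + hstep a i else a i)"

lemma iter_Suc: "sdca_iter x y lam beta As (Suc t) = step (sdca_iter x y lam beta As t) (As t)"
  unfolding step_def hstep_def by (simp add: Let_def)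

lemma clip_bounds: "lo \<le> hi \<Longrightarrow> lo \<le> clip lo hi z \<and> clip lo hi z \<le> hi"
  by (simp add: clip_def)

lemma box_step: "box a \<Longrightarrow> box (step a A)"
  unfolding box_def step_def hstep_def clip_def by auto

lemma box_zero: "box (\<lambda>_. 0)" by (simp add: box_def)

lemma box_iter: "box (sdca_iter x y lam beta As t)"
proof (induction t)
  case 0 show ?case by (simp add: box_def)
next
  case (Suc t) show ?case unfolding iter_Suc by (rule box_step[OF Suc])
qed

lemma w_step: "w (step a A) = w a + (1 / (lam * real CARD('n))) *\<^sub>R (\<Sum>i\<in>A. (hstep a i * y i) *\<^sub>R x i)"
proof -
  have "(\<Sum>i\<in>UNIV. (step a A i * y i) *\<^sub>R x i) = (\<Sum>i\<in>UNIV. (a i * y i) *\<^sub>R x i) + (\<Sum>i\<in>UNIV. (if i \<in> A then (hstep a i * y i) *\<^sub>R x i else 0))"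
  proof -
    have "(step a A i * y i) *\<^sub>R x i = (a i * y i) *\<^sub>R x i + (if i \<in> A then (hstep a i * y i) *\<^sub>R x i else 0)" for i
      by (simp add: step_def algebra_simps scaleR_add_left)
    then show ?thesis by (simp add: sum.distrib[symmetric])
  qed
  also have "(\<Sum>i\<in>UNIV. (if i \<in> A then (hstep a i * y i) *\<^sub>R x i else 0)) = (\<Sum>i\<in>A. (hstep a i * y i) *\<^sub>R x i)"
    by (simp add: sum.If_cases)
  finally show ?thesis by (simp add: wmap_def scaleR_add_right)
qed

lemma sum_step: "(\<Sum>i\<in>UNIV. step a A i) = (\<Sum>i\<in>UNIV. a i) + (\<Sum>i\<in>A. hstep a i)"
proof -
  have "(\<Sum>i\<in>UNIV. step a A i) = (\<Sum>i\<in>UNIV. a i) + (\<Sum>i\<in>UNIV. (if i \<in> A then hstep a i else 0))"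
  proof -
    have "step a A i = a i + (if i \<in> A then hstep a i else 0)" for i by (simp add: step_def)
    then show ?thesis by (simp add: sum.distrib[symmetric])
  qed
  then show ?thesis by (simp add: sum.If_cases)
qed

lemma D_step: "D (step a A) - D a = (1 / real CARD('n)) * (\<Sum>i\<in>A. hstep a i * (1 - y i * (w a \<bullet> x i)))
   - (1 / (2 * lam * (real CARD('n))\<^sup>2)) * (norm (\<Sum>i\<in>A. (hstep a i * y i) *\<^sub>R x i))\<^sup>2"
proof -
  let ?u = "\<Sum>i\<in>A. (hstep a i * y i) *\<^sub>R x i"
  let ?c = "1 / (lam * real CARD('n))"
  have n1: "(norm (w a + ?c *\<^sub>R ?u))\<^sup>2 = (norm (w a))\<^sup>2 + 2 * ?c * (w a \<bullet> ?u) + ?c\<^sup>2 * (norm ?u)\<^sup>2"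
    by (rule norm_add_sq)
  have n2: "w a \<bullet> ?u = (\<Sum>i\<in>A. hstep a i * y i * (w a \<bullet> x i))"
    by (simp add: inner_sum_right)
  have n3: "(\<Sum>i\<in>A. hstep a i * (1 - y i * (w a \<bullet> x i))) = (\<Sum>i\<in>A. hstep a i) - (\<Sum>i\<in>A. hstep a i * y i * (w a \<bullet> x i))"
    by (simp add: right_diff_distrib sum_subtractf mult.assoc)
  show ?thesis
    unfolding dual_eq w_step sum_step n1 n2 n3 using lam_pos
    by (simp add: field_simps power2_eq_square)
qed

lemma gap_alt: "P (w a) - D a = (1 / real CARD('n)) * (\<Sum>i\<in>UNIV. max 0 (1 - y i * (w a \<bullet> x i))) + lam * (norm (w a))\<^sup>2 - (1 / real CARD('n)) * (\<Sum>i\<in>UNIV. a i)"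
  unfolding primal_def dual_eq by simp

lemma w_avg:
  assumes "finite S"
  shows "w (\<lambda>i. c * (\<Sum>t\<in>S. al t i)) = c *\<^sub>R (\<Sum>t\<in>S. w (al t))"
proof -
  have "(\<Sum>i\<in>UNIV. ((c * (\<Sum>t\<in>S. al t i)) * y i) *\<^sub>R x i) = c *\<^sub>R (\<Sum>t\<in>S. \<Sum>i\<in>UNIV. (al t i * y i) *\<^sub>R x i)"
    by (simp add: sum_distrib_left sum_distrib_right scaleR_sum_left scaleR_sum_right sum.swap[of _ S] mult_ac)
  then show ?thesis unfolding wmap_def by (simp add: scaleR_sum_right)
qed

lemma max_avg:
  fixes z :: "'t \<Rightarrow> real"
  assumes "finite S" "S \<noteq> {}"
  shows "max 0 ((1 / real (card S)) * (\<Sum>t\<in>S. z t)) \<le> (1 / real (card S)) * (\<Sum>t\<in>S. max 0 (z t))"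
proof -
  have "(\<Sum>t\<in>S. z t) \<le> (\<Sum>t\<in>S. max 0 (z t))" by (rule sum_mono) simp
  moreover have "0 \<le> (\<Sum>t\<in>S. max 0 (z t))" by (rule sum_nonneg) simp
  ultimately show ?thesis by (auto intro: divide_right_mono)
qed

lemma normsq_avg:
  fixes v :: "'t \<Rightarrow> 'd"
  assumes "finite S" "S \<noteq> {}"
  shows "(norm ((1 / real (card S)) *\<^sub>R (\<Sum>t\<in>S. v t)))\<^sup>2 \<le> (1 / real (card S)) * (\<Sum>t\<in>S. (norm (v t))\<^sup>2)"
proof -
  let ?L = "real (card S)"
  have L: "?L > 0" using assms by (simp add: card_gt_0_iff)
  have "norm ((1 / ?L) *\<^sub>R (\<Sum>t\<in>S. v t)) \<le> (\<Sum>t\<in>S. (1 / ?L) * norm (v t))"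
    using norm_sum[of v S] L by (simp add: sum_divide_distrib[symmetric] divide_right_mono)
  then have "(norm ((1 / ?L) *\<^sub>R (\<Sum>t\<in>S. v t)))\<^sup>2 \<le> (\<Sum>t\<in>S. (1 / ?L) * norm (v t))\<^sup>2"
    by (rule power_mono) simp
  also have "\<dots> \<le> (\<Sum>t\<in>S. (1 / ?L) * (norm (v t))\<^sup>2)"
    using convex_on_sum[OF assms convex_power2, of "\<lambda>_. 1 / ?L" "\<lambda>t. norm (v t)"] L by simp
  finally show ?thesis by (simp add: sum_distrib_left)
qed

lemma gap_avg:
  fixes al :: "'t \<Rightarrow> 'n \<Rightarrow> real" and S :: "'t set"
  assumes "finite S" "S \<noteq> {}"
  defines "ab \<equiv> (\<lambda>i. (1 / real (card S)) * (\<Sum>t\<in>S. al t i))"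
  shows "P (w ab) - D ab \<le> (1 / real (card S)) * (\<Sum>t\<in>S. P (w (al t)) - D (al t))"
proof -
  let ?L = "real (card S)"
  let ?n = "real CARD('n)"
  have L: "?L > 0" using assms by (simp add: card_gt_0_iff)
  have wab: "w ab = (1 / ?L) *\<^sub>R (\<Sum>t\<in>S. w (al t))" unfolding ab_def by (rule w_avg[OF assms(1)])
  have t1: "max 0 (1 - y i * (w ab \<bullet> x i)) \<le> (1 / ?L) * (\<Sum>t\<in>S. max 0 (1 - y i * (w (al t) \<bullet> x i)))" for i
  proof -
    have "1 - y i * (w ab \<bullet> x i) = (1 / ?L) * (\<Sum>t\<in>S. 1 - y i * (w (al t) \<bullet> x i))"
      unfolding wab using L by (simp add: inner_sum_left sum_subtractf sum_distrib_left field_simps)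
    then show ?thesis using max_avg[OF assms(1,2), of "\<lambda>t. 1 - y i * (w (al t) \<bullet> x i)"] by simp
  qed
  have T1: "(\<Sum>i\<in>UNIV. max 0 (1 - y i * (w ab \<bullet> x i))) \<le> (1 / ?L) * (\<Sum>t\<in>S. \<Sum>i\<in>UNIV. max 0 (1 - y i * (w (al t) \<bullet> x i)))"
    using sum_mono[of UNIV, OF t1] by (simp add: sum_distrib_left sum.swap[of _ S])
  have T2: "(norm (w ab))\<^sup>2 \<le> (1 / ?L) * (\<Sum>t\<in>S. (norm (w (al t)))\<^sup>2)"
    unfolding wab by (rule normsq_avg[OF assms(1,2)])
  have T3: "(\<Sum>i\<in>UNIV. ab i) = (1 / ?L) * (\<Sum>t\<in>S. \<Sum>i\<in>UNIV. al t i)"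
    unfolding ab_def by (simp add: sum_distrib_left sum.swap[of _ S])
  have "P (w ab) - D ab \<le> (1 / ?n) * ((1 / ?L) * (\<Sum>t\<in>S. \<Sum>i\<in>UNIV. max 0 (1 - y i * (w (al t) \<bullet> x i))))
      + lam * ((1 / ?L) * (\<Sum>t\<in>S. (norm (w (al t)))\<^sup>2)) - (1 / ?n) * ((1 / ?L) * (\<Sum>t\<in>S. \<Sum>i\<in>UNIV. al t i))"
    unfolding gap_alt T3 using T1 T2 lam_pos
    by (intro diff_mono add_mono mult_left_mono) simp_all
  also have "\<dots> = (1 / ?L) * (\<Sum>t\<in>S. P (w (al t)) - D (al t))"
    unfolding gap_alt by (simp add: sum.distrib sum_subtractf sum_distrib_left algebra_simps)
  finally show ?thesis .
qed

end

locale sdca2 = sdca x y lam beta for x :: "'n::finite \<Rightarrow> 'd::euclidean_space" and y lam beta +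
  fixes b :: nat and sigma2 :: real
  assumes n_ge: "CARD('n) \<ge> 2"
    and x_norm: "\<forall>i. norm (x i) \<le> 1"
    and sigma: "sigma2 \<ge> (spectral_norm x)\<^sup>2 / real CARD('n)"
    and b_ge: "1 \<le> b" and b_le: "b \<le> CARD('n)"
    and beta_eq: "beta = 1 + (real b - 1) * (real CARD('n) * sigma2 - 1) / (real CARD('n) - 1)"
    and beta_pos: "beta > 0"
begin

lemma ESO:
  "measure_pmf.expectation (batch_pmf b) (\<lambda>A. (norm (\<Sum>i\<in>A. (h i * y i) *\<^sub>R x i))\<^sup>2)
     \<le> real b / real CARD('n) * beta * (\<Sum>i\<in>UNIV. (h i)\<^sup>2)"
proof -
  let ?n = "real CARD('n)"
  define p2 where "p2 = real b * (real b - 1) / (?n * (?n - 1))"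
  let ?z = "\<lambda>i. (h i * y i) *\<^sub>R x i"
  let ?H = "\<Sum>i\<in>UNIV. (h i)\<^sup>2"
  have n1: "?n - 1 > 0" using n_ge by simp
  have sq: "(norm (\<Sum>i\<in>A. ?z i))\<^sup>2 = (\<Sum>i\<in>A. \<Sum>j\<in>A. ?z i \<bullet> ?z j)" for A
    unfolding power2_norm_eq_inner by (simp only: inner_sum_left inner_sum_right) (rule sum.swap)
  have E: "measure_pmf.expectation (batch_pmf b) (\<lambda>A. (norm (\<Sum>i\<in>A. ?z i))\<^sup>2)
     = (real b / ?n - p2) * (\<Sum>i\<in>UNIV. ?z i \<bullet> ?z i) + p2 * (\<Sum>i\<in>UNIV. \<Sum>j\<in>UNIV. ?z i \<bullet> ?z j)"
    unfolding sq p2_def using exp_batch2[OF b_ge b_le n_ge] by simp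
  have p2_nn: "p2 \<ge> 0" unfolding p2_def using b_ge n1 by simp
  have p2_le: "p2 \<le> real b / ?n"
  proof -
    have "(real b - 1) / (?n - 1) \<le> 1" using b_le n1 by simp
    then have "real b / ?n * ((real b - 1) / (?n - 1)) \<le> real b / ?n * 1"
      by (rule mult_left_mono) simp
    then show ?thesis unfolding p2_def by (simp add: field_simps)
  qed
  have t1: "(\<Sum>i\<in>UNIV. ?z i \<bullet> ?z i) \<le> ?H"
  proof (rule sum_mono)
    fix i
    have "?z i \<bullet> ?z i = (h i)\<^sup>2 * (y i * y i) * (norm (x i))\<^sup>2"
      by (simp add: power2_norm_eq_inner power2_eq_square mult_ac flip: power2_norm_eq_inner)
    also have "\<dots> \<le> (h i)\<^sup>2 * 1"
      using x_norm[rule_format, of i] y_sq[of i] by (simp add: mult_left_le power_le_one)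
    finally show "?z i \<bullet> ?z i \<le> (h i)\<^sup>2" by simp
  qed
  have t2: "(\<Sum>i\<in>UNIV. \<Sum>j\<in>UNIV. ?z i \<bullet> ?z j) \<le> ?n * sigma2 * ?H"
  proof -
    have "(\<Sum>i\<in>UNIV. \<Sum>j\<in>UNIV. ?z i \<bullet> ?z j) = (norm (\<Sum>i\<in>UNIV. ?z i))\<^sup>2"
      unfolding power2_norm_eq_inner by (simp only: inner_sum_left inner_sum_right) (rule sum.swap)
    also have "\<dots> \<le> (spectral_norm x)\<^sup>2 * (\<Sum>i\<in>UNIV. (h i * y i)\<^sup>2)"
      by (rule spectral_bound)
    also have "(\<Sum>i\<in>UNIV. (h i * y i)\<^sup>2) = ?H"
      using y_sq by (simp add: power2_eq_square mult_ac)
    also have "(spectral_norm x)\<^sup>2 * ?H \<le> ?n * sigma2 * ?H"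
      using sigma by (intro mult_right_mono) (simp_all add: field_simps sum_nonneg)
    finally show ?thesis .
  qed
  have "(real b / ?n - p2) * (\<Sum>i\<in>UNIV. ?z i \<bullet> ?z i) + p2 * (\<Sum>i\<in>UNIV. \<Sum>j\<in>UNIV. ?z i \<bullet> ?z j)
      \<le> (real b / ?n - p2) * ?H + p2 * (?n * sigma2 * ?H)"
    using t1 t2 p2_nn p2_le by (intro add_mono mult_left_mono) simp_all
  also have "\<dots> = real b / ?n * beta * ?H"
  proof -
    define R where "R = (real b - 1) / (?n - 1)"
    have q: "p2 = real b / ?n * R" unfolding p2_def R_def by simp
    have r: "beta = 1 + R * (?n * sigma2 - 1)" unfolding beta_eq R_def by simp
    have c: "real b / ?n * beta = real b / ?n - p2 + p2 * (?n * sigma2)"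
      unfolding r q by (simp add: algebra_simps)
    show ?thesis unfolding c by (simp add: algebra_simps)
  qed
  finally show ?thesis using E by simp
qed


lemma fin_batch: "finite (set_pmf (batch_pmf b :: 'n set pmf))"
  unfolding batch_pmf_def using batches_ne[OF b_le] by simp

lemma int_batch: "integrable (measure_pmf (batch_pmf b :: 'n set pmf)) f"
  for f :: "'n set \<Rightarrow> real"
  by (rule integrable_measure_pmf_finite[OF fin_batch])

lemma one_step:
  assumes "box a" "0 \<le> s" "s \<le> 1"
  shows "measure_pmf.expectation (batch_pmf b) (\<lambda>A. D (step a A))
     \<ge> D a + real b / real CARD('n) * (s * (P (w a) - D a) - s\<^sup>2 * beta / (2 * lam * real CARD('n)))"
proof -
  let ?n = "real CARD('n)"
  let ?h = "hstep a"
  let ?m = "\<lambda>i. y i * (w a \<bullet> x i)"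
  define k where "k = 1 / (2 * lam * ?n\<^sup>2)"
  define c where "c = beta / (2 * lam * ?n\<^sup>2)"
  let ?G = "\<lambda>A. (\<Sum>i\<in>A. ?h i * (1 - ?m i))"
  let ?Q = "\<lambda>A. (norm (\<Sum>i\<in>A. (?h i * y i) *\<^sub>R x i))\<^sup>2"
  have k_nn: "k \<ge> 0" unfolding k_def using lam_pos by simp
  have c_pos: "c > 0" unfolding c_def using lam_pos beta_pos by simp
  have Dst: "D (step a A) = D a + (1 / ?n * ?G A - k * ?Q A)" for A
    using D_step[of a A] unfolding k_def by simp
  have "measure_pmf.expectation (batch_pmf b) (\<lambda>A. D (step a A))
      = D a + (1 / ?n * measure_pmf.expectation (batch_pmf b) ?G - k * measure_pmf.expectation (batch_pmf b) ?Q)"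
    unfolding Dst by (simp add: int_batch)
  also have "\<dots> \<ge> D a + (1 / ?n * (real b / ?n * (\<Sum>i\<in>UNIV. ?h i * (1 - ?m i))) - k * (real b / ?n * beta * (\<Sum>i\<in>UNIV. (?h i)\<^sup>2)))"
    using exp_batch1[OF b_ge b_le, of "\<lambda>i. ?h i * (1 - ?m i)"] ESO[of ?h] mult_left_mono[OF ESO[of ?h] k_nn]
    by simp
  finally have st0: "measure_pmf.expectation (batch_pmf b) (\<lambda>A. D (step a A))
      \<ge> D a + (1 / ?n * (real b / ?n * (\<Sum>i\<in>UNIV. ?h i * (1 - ?m i))) - k * (real b / ?n * beta * (\<Sum>i\<in>UNIV. (?h i)\<^sup>2)))" .
  have e1: "(\<Sum>i\<in>UNIV. (1 - ?m i) / ?n * ?h i - c * (?h i)\<^sup>2) = 1 / ?n * (\<Sum>i\<in>UNIV. ?h i * (1 - ?m i)) - c * (\<Sum>i\<in>UNIV. (?h i)\<^sup>2)"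
    by (simp add: sum_subtractf sum_distrib_left mult_ac)
  have e2: "k * (real b / ?n * beta * (\<Sum>i\<in>UNIV. (?h i)\<^sup>2)) = real b / ?n * (c * (\<Sum>i\<in>UNIV. (?h i)\<^sup>2))"
    unfolding k_def c_def by (simp add: mult_ac)
  have st1: "measure_pmf.expectation (batch_pmf b) (\<lambda>A. D (step a A))
      \<ge> D a + real b / ?n * (\<Sum>i\<in>UNIV. (1 - ?m i) / ?n * ?h i - c * (?h i)\<^sup>2)"
    using st0 unfolding e1 e2 by (simp add: algebra_simps)
  let ?v = "\<lambda>i. s * (uu a i - a i)"
  have opt: "(1 - ?m i) / ?n * ?v i - c * (?v i)\<^sup>2 \<le> (1 - ?m i) / ?n * ?h i - c * (?h i)\<^sup>2" for i
    unfolding hstep_def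
  proof (rule clip_opt[OF _ _ c_pos])
    have a0: "0 \<le> a i" and a1: "a i \<le> 1" using assms(1) by (auto simp: box_def)
    have u01: "uu a i = 0 \<or> uu a i = 1" by (simp add: uu_def)
    have f1: "0 \<le> s * a i" using assms(2) a0 by simp
    have f2: "s * a i \<le> a i" using mult_left_le_one_le[of "a i" s] assms(2,3) a0 by simp
    have f3: "s * a i \<le> s" using mult_right_le_one_le[of s "a i"] assms(2) a0 a1 by simp
    have f4: "0 \<le> (1 - s) * (1 - a i)" using assms(3) a1 by simp
    have f5: "(1 - s) * (1 - a i) = 1 - a i - s + s * a i" by (simp add: algebra_simps)
    show "- a i \<le> ?v i"
    proof (cases "uu a i = 0")
      case True then show ?thesis using f2 by simp
    next
      case False then have "uu a i = 1" using u01 by simp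
      then show ?thesis using f3 a0 by (simp add: right_diff_distrib)
    qed
    show "?v i \<le> 1 - a i"
    proof (cases "uu a i = 0")
      case True then show ?thesis using f1 a1 by simp
    next
      case False then have "uu a i = 1" using u01 by simp
      then show ?thesis using f4 f5 by (simp add: right_diff_distrib)
    qed
    show "(1 - ?m i) / ?n = 2 * c * (lam * ?n * (1 - ?m i) / beta)"
      unfolding c_def using aux_c[OF lam_pos beta_pos, of ?n "1 - ?m i"] by simp
  qed
  have sq1: "(uu a i - a i)\<^sup>2 \<le> 1" for i
  proof -
    have "0 \<le> a i" "a i \<le> 1" using assms(1) by (auto simp: box_def)
    then have "\<bar>uu a i - a i\<bar> \<le> 1" by (auto simp: uu_def)
    then show ?thesis by (simp add: abs_square_le_1)
  qed
  have "(\<Sum>i\<in>UNIV. (1 - ?m i) / ?n * ?v i - c * (?v i)\<^sup>2)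
      = s * (P (w a) - D a) - c * s\<^sup>2 * (\<Sum>i\<in>UNIV. (uu a i - a i)\<^sup>2)"
  proof -
    have pt: "(1 - ?m i) / ?n * ?v i - c * (?v i)\<^sup>2 = s * (1 / ?n * ((uu a i - a i) * (1 - ?m i))) - c * s\<^sup>2 * (uu a i - a i)\<^sup>2" for i
      by (simp add: power_mult_distrib)
    show ?thesis unfolding gap_eq pt by (simp add: sum_subtractf sum_distrib_left)
  qed
  also have "\<dots> \<ge> s * (P (w a) - D a) - c * s\<^sup>2 * ?n"
  proof -
    have "(\<Sum>i\<in>UNIV. (uu a i - a i)\<^sup>2) \<le> (\<Sum>i\<in>(UNIV::'n set). 1)" by (rule sum_mono[OF sq1])
    then have "(\<Sum>i\<in>UNIV. (uu a i - a i)\<^sup>2) \<le> ?n" by simp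
    from mult_left_mono[OF this, of "c * s\<^sup>2"] c_pos show ?thesis by simp
  qed
  moreover have "(\<Sum>i\<in>UNIV. (1 - ?m i) / ?n * ?v i - c * (?v i)\<^sup>2) \<le> (\<Sum>i\<in>UNIV. (1 - ?m i) / ?n * ?h i - c * (?h i)\<^sup>2)"
    by (rule sum_mono[OF opt])
  ultimately have st2: "s * (P (w a) - D a) - c * s\<^sup>2 * ?n \<le> (\<Sum>i\<in>UNIV. (1 - ?m i) / ?n * ?h i - c * (?h i)\<^sup>2)"
    by linarith
  have "c * s\<^sup>2 * ?n = s\<^sup>2 * beta / (2 * lam * ?n)" unfolding c_def by (simp add: power2_eq_square mult_ac)
  with st1 st2 show ?thesis
    using mult_left_mono[OF st2, of "real b / ?n"] by simp
qed


primrec alpha_pmf :: "nat \<Rightarrow> ('n \<Rightarrow> real) pmf" where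
  "alpha_pmf 0 = return_pmf (\<lambda>_. 0)"
| "alpha_pmf (Suc t) = bind_pmf (alpha_pmf t) (\<lambda>a. map_pmf (step a) (batch_pmf b))"

lemma fin_alpha: "finite (set_pmf (alpha_pmf t))"
  by (induction t) (auto simp: fin_batch)

lemma box_alpha: "a \<in> set_pmf (alpha_pmf t) \<Longrightarrow> box a"
  by (induction t arbitrary: a) (auto simp: box_zero box_step)

lemma iter_dep: "(\<And>s. s < t \<Longrightarrow> As s = Bs s) \<Longrightarrow> sdca_iter x y lam beta As t = sdca_iter x y lam beta Bs t"
proof (induction t)
  case 0 show ?case by simp
next
  case (Suc t)
  then have "sdca_iter x y lam beta As t = sdca_iter x y lam beta Bs t" by simp
  moreover have "As t = Bs t" using Suc.prems by simp
  ultimately show ?case by (simp only: iter_Suc)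
qed

lemma marg: "map_pmf (\<lambda>As. sdca_iter x y lam beta As t) (Pi_pmf {..<t} {} (\<lambda>_. batch_pmf b)) = alpha_pmf t"
proof (induction t)
  case 0 show ?case by simp
next
  case (Suc t)
  let ?Pi = "Pi_pmf {..<t} {} (\<lambda>_. batch_pmf b)"
  have "Pi_pmf {..<Suc t} {} (\<lambda>_. batch_pmf b) = bind_pmf (batch_pmf b) (\<lambda>A. bind_pmf ?Pi (\<lambda>f. return_pmf (f(t := A))))"
    unfolding lessThan_Suc by (subst Pi_pmf_insert') auto
  also have "\<dots> = bind_pmf (batch_pmf b) (\<lambda>A. map_pmf (\<lambda>f. f(t := A)) ?Pi)"
    by (simp add: map_pmf_def)
  finally have eqPi: "Pi_pmf {..<Suc t} {} (\<lambda>_. batch_pmf b) = bind_pmf (batch_pmf b) (\<lambda>A. map_pmf (\<lambda>f. f(t := A)) ?Pi)" .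
  have "map_pmf (\<lambda>As. sdca_iter x y lam beta As (Suc t)) (Pi_pmf {..<Suc t} {} (\<lambda>_. batch_pmf b))
      = bind_pmf (batch_pmf b) (\<lambda>A. map_pmf (\<lambda>f. sdca_iter x y lam beta (f(t := A)) (Suc t)) ?Pi)"
    by (simp only: eqPi map_bind_pmf map_pmf_comp)
  also have "\<dots> = bind_pmf (batch_pmf b) (\<lambda>A. map_pmf (\<lambda>f. step (sdca_iter x y lam beta f t) A) ?Pi)"
  proof -
    have "sdca_iter x y lam beta (f(t := A)) (Suc t) = step (sdca_iter x y lam beta f t) A" for f A
      unfolding iter_Suc by (subst iter_dep[of t "f(t := A)" f]) auto
    then show ?thesis by simp
  qed
  also have "\<dots> = bind_pmf (batch_pmf b) (\<lambda>A. map_pmf (\<lambda>a. step a A) (alpha_pmf t))"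
    by (simp add: Suc.IH[symmetric] map_pmf_comp)
  also have "\<dots> = alpha_pmf (Suc t)"
    by (simp add: map_pmf_def bind_commute_pmf[of "batch_pmf b"])
  finally show ?case .
qed

lemma marg_T:
  assumes "t \<le> T"
  shows "map_pmf (\<lambda>As. sdca_iter x y lam beta As t) (schedule_pmf b T) = alpha_pmf t"
proof -
  have "Pi_pmf {..<t} {} (\<lambda>_. batch_pmf b) = map_pmf (\<lambda>f s. if s \<in> {..<t} then f s else {}) (schedule_pmf b T)"
    unfolding schedule_pmf_def using assms by (intro Pi_pmf_subset) auto
  note eq = this
  have "alpha_pmf t = map_pmf (\<lambda>As. sdca_iter x y lam beta As t) (Pi_pmf {..<t} {} (\<lambda>_. batch_pmf b))"
    using marg[of t] by simp
  also have "\<dots> = map_pmf (\<lambda>As. sdca_iter x y lam beta (\<lambda>s. if s \<in> {..<t} then As s else {}) t) (schedule_pmf b T)"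
    unfolding eq by (simp only: map_pmf_comp)
  also have "\<dots> = map_pmf (\<lambda>As. sdca_iter x y lam beta As t) (schedule_pmf b T)"
    by (intro map_pmf_cong refl iter_dep) auto
  finally show ?thesis by simp
qed

lemma int_alpha: "integrable (measure_pmf (alpha_pmf t)) f" for f :: "('n \<Rightarrow> real) \<Rightarrow> real"
  by (rule integrable_measure_pmf_finite[OF fin_alpha])

lemma exp_alpha_Suc:
  "measure_pmf.expectation (alpha_pmf (Suc t)) f
     = measure_pmf.expectation (alpha_pmf t) (\<lambda>a. measure_pmf.expectation (batch_pmf b) (\<lambda>A. f (step a A)))"
  for f :: "('n \<Rightarrow> real) \<Rightarrow> real"
proof -
  have "measure_pmf.expectation (alpha_pmf (Suc t)) f
     = (\<Sum>a\<in>set_pmf (alpha_pmf t). pmf (alpha_pmf t) a *\<^sub>R measure_pmf.expectation (map_pmf (step a) (batch_pmf b)) f)"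
    unfolding alpha_pmf.simps by (rule pmf_expectation_bind) (auto simp: fin_alpha fin_batch)
  also have "\<dots> = measure_pmf.expectation (alpha_pmf t) (\<lambda>a. measure_pmf.expectation (batch_pmf b) (\<lambda>A. f (step a A)))"
    by (subst integral_measure_pmf[OF fin_alpha]) auto
  finally show ?thesis .
qed


definition Ed :: "nat \<Rightarrow> real" where "Ed t = measure_pmf.expectation (alpha_pmf t) D"
definition Eg :: "nat \<Rightarrow> real" where "Eg t = measure_pmf.expectation (alpha_pmf t) (\<lambda>a. P (w a) - D a)"

lemma Ed_step:
  assumes "0 \<le> s" "s \<le> 1"
  shows "Ed (Suc t) \<ge> Ed t + real b / real CARD('n) * (s * Eg t - s\<^sup>2 * beta / (2 * lam * real CARD('n)))"
proof -
  let ?K = "real b / real CARD('n)"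
  let ?c = "s\<^sup>2 * beta / (2 * lam * real CARD('n))"
  have "Ed (Suc t) = measure_pmf.expectation (alpha_pmf t) (\<lambda>a. measure_pmf.expectation (batch_pmf b) (\<lambda>A. D (step a A)))"
    unfolding Ed_def by (rule exp_alpha_Suc)
  also have "\<dots> \<ge> measure_pmf.expectation (alpha_pmf t) (\<lambda>a. D a + ?K * (s * (P (w a) - D a) - ?c))"
    by (rule exp_mono_pmf[OF fin_alpha]) (rule one_step[OF box_alpha assms])
  finally have "Ed (Suc t) \<ge> measure_pmf.expectation (alpha_pmf t) (\<lambda>a. D a + ?K * (s * (P (w a) - D a) - ?c))" .
  moreover have "measure_pmf.expectation (alpha_pmf t) (\<lambda>a. D a + ?K * (s * (P (w a) - D a) - ?c)) = Ed t + ?K * (s * Eg t - ?c)"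
    unfolding Ed_def Eg_def by (simp add: int_alpha)
  ultimately show ?thesis by simp
qed

lemma Ed_le: "Ed t \<le> P v"
proof -
  have "Ed t \<le> measure_pmf.expectation (alpha_pmf t) (\<lambda>_. P v)"
    unfolding Ed_def by (rule exp_mono_pmf[OF fin_alpha]) (rule weak_duality[OF box_alpha])
  then show ?thesis by simp
qed

lemma Eg_ge:
  assumes "\<forall>v. P ws \<le> P v"
  shows "P ws - Ed t \<le> Eg t"
proof -
  have "measure_pmf.expectation (alpha_pmf t) (\<lambda>a. P ws - D a) \<le> Eg t"
    unfolding Eg_def by (rule exp_mono_pmf[OF fin_alpha]) (use assms in simp)
  then show ?thesis unfolding Ed_def by (simp add: int_alpha)
qed

lemma Ed0: "Ed 0 = 0"
  unfolding Ed_def by (simp add: dual_def)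

lemma P0: "P 0 = 1"
  unfolding primal_def by simp

end


lemma rate_step:
  fixes e r K0 D :: real
  assumes "0 < r" "r \<le> 1" "0 < K0" "2 \<le> D" "0 \<le> e" "e \<le> 4 * K0 / D"
  shows "(1 - r * (2 / D)) * e + r * (2 / D)\<^sup>2 * K0 \<le> 4 * K0 / (D + r)"
proof -
  have Dp: "D > 0" using assms by simp
  have c: "0 \<le> 1 - r * (2 / D)"
  proof -
    have "2 / D \<le> 1" using assms Dp by simp
    then have "r * (2 / D) \<le> 1 * 1" using assms by (intro mult_mono) auto
    then show ?thesis by simp
  qed
  have "(1 - r * (2 / D)) * e \<le> (1 - r * (2 / D)) * (4 * K0 / D)"
    using c assms by (intro mult_left_mono) auto
  moreover have "(1 - r * (2 / D)) * (4 * K0 / D) + r * (2 / D)\<^sup>2 * K0 = 4 * K0 * (D - r) / D\<^sup>2"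
    using Dp by (simp add: field_simps power2_eq_square)
  moreover have "4 * K0 * (D - r) / D\<^sup>2 \<le> 4 * K0 / (D + r)"
  proof -
    have "(D - r) * (D + r) \<le> D\<^sup>2" by (simp add: power2_eq_square algebra_simps)
    then have "(D - r) / D\<^sup>2 \<le> 1 / (D + r)" using Dp assms by (simp add: field_simps)
    from mult_left_mono[OF this, of "4 * K0"] assms show ?thesis by simp
  qed
  ultimately show ?thesis by linarith
qed

lemma rate:
  fixes e g :: "nat \<Rightarrow> real" and r K0 eps :: real and t0 T0 T :: nat
  assumes r: "0 < r" "r \<le> 1" and K0: "0 < K0"
    and rec: "\<And>t s. 0 \<le> s \<Longrightarrow> s \<le> 1 \<Longrightarrow> e (Suc t) \<le> e t - r * (s * g t - s\<^sup>2 * K0)"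
    and ge: "\<And>t. e t \<le> g t" and nn: "\<And>t. 0 \<le> e t" and e0: "e 0 \<le> 1"
    and ex: "(1 - r) ^ t0 \<le> K0"
    and T0: "t0 \<le> T0" and c1: "4 * K0 / (2 + r * (real T0 - real t0)) \<le> eps / 2"
    and TT: "T0 < T" "1 \<le> r * real (T - T0)" and c2: "K0 / (r * real (T - T0)) \<le> eps / 2"
  shows "(1 / real (T - T0)) * (\<Sum>t\<in>{T0..<T}. g t) \<le> eps"
proof -
  have rec': "e (Suc t) \<le> (1 - r * s) * e t + r * s\<^sup>2 * K0" if "0 \<le> s" "s \<le> 1" for t s
  proof -
    have "r * s * e t \<le> r * s * g t" using ge[of t] r that by (intro mult_left_mono) auto
    then show ?thesis using rec[OF that, of t] by (simp add: algebra_simps)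
  qed
  have P1: "e t \<le> (1 - r) ^ t + K0" for t
  proof (induction t)
    case 0 then show ?case using e0 K0 by simp
  next
    case (Suc t)
    have "e (Suc t) \<le> (1 - r) * e t + r * K0" using rec'[of 1 t] by simp
    also have "\<dots> \<le> (1 - r) * ((1 - r) ^ t + K0) + r * K0"
      using Suc r by (intro add_mono mult_left_mono) auto
    also have "\<dots> = (1 - r) ^ Suc t + K0" by (simp add: algebra_simps)
    finally show ?case .
  qed
  have P2: "e (t0 + k) \<le> 4 * K0 / (2 + r * real k)" for k
  proof (induction k)
    case 0 then show ?case using P1[of t0] ex by simp
  next
    case (Suc k)
    let ?D = "2 + r * real k"
    have D2: "2 \<le> ?D" using r by simp
    have s01: "0 \<le> 2 / ?D" "2 / ?D \<le> 1" using D2 by auto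
    have "e (t0 + Suc k) \<le> (1 - r * (2 / ?D)) * e (t0 + k) + r * (2 / ?D)\<^sup>2 * K0"
      using rec'[OF s01, of "t0 + k"] by simp
    also have "\<dots> \<le> 4 * K0 / (?D + r)"
      by (rule rate_step[OF r K0 D2 nn Suc])
    finally show ?case by (simp add: algebra_simps)
  qed
  define L where "L = real (T - T0)"
  have Lp: "L > 0" using TT unfolding L_def by simp
  have TT2: "1 \<le> r * L" and c2': "K0 / (r * L) \<le> eps / 2" using TT c2 unfolding L_def by auto
  define s where "s = 1 / (r * L)"
  have s01: "0 \<le> s" "s \<le> 1" unfolding s_def using TT2 r Lp by auto
  have rs: "r * s = 1 / L" unfolding s_def using r by simp
  have step: "g t / L \<le> e t - e (Suc t) + K0 / (r * L) / L" for t
  proof -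
    have "e (Suc t) \<le> e t - (r * s * g t - r * s * s * K0)" using rec[OF s01, of t]
      by (simp add: algebra_simps power2_eq_square)
    moreover have "r * s * s * K0 = K0 / (r * L) / L" unfolding s_def using r Lp by (simp add: field_simps)
    ultimately show ?thesis unfolding rs by simp
  qed
  have "(\<Sum>t\<in>{T0..<T}. g t / L) \<le> (\<Sum>t\<in>{T0..<T}. e t - e (Suc t) + K0 / (r * L) / L)"
    by (rule sum_mono) (rule step)
  also have "\<dots> = e T0 - e T + K0 / (r * L)"
  proof -
    have "(\<Sum>t\<in>{T0..<T}. e t - e (Suc t)) = e T0 - e T"
    proof -
      have "(\<Sum>t\<in>{T0..<T}. e t - e (Suc t)) = (\<Sum>t\<in>{T0..<T}. - (e (Suc t) - e t))" by simp
      also have "\<dots> = - (\<Sum>t\<in>{T0..<T}. e (Suc t) - e t)" by (rule sum_negf)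
      finally show ?thesis using sum_Suc_diff'[of T0 T e] TT by simp
    qed
    moreover have "real (T - T0) * (K0 / (r * L) / L) = K0 / (r * L)" using Lp unfolding L_def[symmetric] by simp
    ultimately show ?thesis by (simp add: sum.distrib)
  qed
  also have "\<dots> \<le> eps"
  proof -
    have "e T0 \<le> 4 * K0 / (2 + r * (real T0 - real t0))"
      using P2[of "T0 - t0"] T0 by (simp add: of_nat_diff)
    then show ?thesis using c1 c2' nn[of T] by linarith
  qed
  finally show ?thesis unfolding L_def by (simp add: sum_divide_distrib)
qed



lemma box_avg:
  fixes al :: "nat \<Rightarrow> 'n::finite \<Rightarrow> real"
  assumes "T0 < T" "\<And>t i. 0 \<le> al t i \<and> al t i \<le> 1"
  shows "0 \<le> (1 / real (T - T0)) * (\<Sum>t\<in>{T0..<T}. al t i) \<and> (1 / real (T - T0)) * (\<Sum>t\<in>{T0..<T}. al t i) \<le> 1"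
proof -
  have "0 \<le> (\<Sum>t\<in>{T0..<T}. al t i)" using assms(2) by (simp add: sum_nonneg)
  moreover have "(\<Sum>t\<in>{T0..<T}. al t i) \<le> (\<Sum>t\<in>{T0..<T}. 1)" using assms(2) by (intro sum_mono) auto
  ultimately show ?thesis using assms(1) by (simp add: field_simps)
qed

theorem theorem2:
  fixes x :: "'n::finite \<Rightarrow> 'd::euclidean_space"
    and y :: "'n \<Rightarrow> real"
    and sigma2 lam eps :: real
    and b t0 T0 T :: nat
    and wstar :: 'd
  defines "n \<equiv> real CARD('n)"
  defines "beta \<equiv> 1 + (real b - 1) * (n * sigma2 - 1) / (n - 1)"
  assumes n_ge: "CARD('n) \<ge> 2"
    and y_pm: "\<forall>i. y i \<in> {-1, 1}"
    and x_norm: "\<forall>i. norm (x i) \<le> 1"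
    and sigma: "sigma2 \<ge> (spectral_norm x)\<^sup>2 / n"
    and lam_pos: "lam > 0"
    and b_range: "1 \<le> b" "b \<le> CARD('n)"
    and beta_pos: "beta > 0"
    and wstar_min: "\<forall>w. primal x y lam wstar \<le> primal x y lam w"
    and eps_pos: "eps > 0"
    and t0_ge: "int t0 \<ge> max 0 (ceiling (n / real b * ln (2 * lam * n / beta)))"
    and T0_ge: "real T0 \<ge> real t0 + beta / real b * max 0 (4 / (lam * eps) - 2 * n / beta)"
    and T_ge: "real T \<ge> real T0 + max (real_of_int (ceiling (n / real b))) (beta / real b * (1 / (lam * eps)))"
  shows "measure_pmf.expectation (schedule_pmf b T)
            (\<lambda>As. primal x y lam (wmap x y lam (alpha_bar x y lam beta T0 T As)))
           - primal x y lam wstar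
         \<le> measure_pmf.expectation (schedule_pmf b T)
            (\<lambda>As. primal x y lam (wmap x y lam (alpha_bar x y lam beta T0 T As))
                  - dual x y lam (alpha_bar x y lam beta T0 T As))
       \<and> measure_pmf.expectation (schedule_pmf b T)
            (\<lambda>As. primal x y lam (wmap x y lam (alpha_bar x y lam beta T0 T As))
                  - dual x y lam (alpha_bar x y lam beta T0 T As))
         \<le> eps"
proof -
  interpret S: sdca2 x y lam beta b sigma2
    by unfold_locales (use n_ge y_pm x_norm sigma lam_pos b_range beta_pos in \<open>simp_all add: n_def beta_def\<close>)
  let ?P = "primal x y lam"
  let ?D = "dual x y lam"
  let ?w = "wmap x y lam"
  let ?ab = "alpha_bar x y lam beta T0 T"
  let ?it = "\<lambda>As t. sdca_iter x y lam beta As t"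
  let ?E = "measure_pmf.expectation (schedule_pmf b T :: (nat \<Rightarrow> 'n set) pmf)"
  have npos: "n > 0" unfolding n_def by simp
  have bpos: "real b > 0" using b_range by simp
  have nb: "n / real b > 0" using npos bpos by simp
  have ceil1: "real_of_int (ceiling (n / real b)) \<ge> n / real b" by (rule le_of_int_ceiling)
  have TT: "T0 < T"
  proof -
    have "real_of_int (ceiling (n / real b)) > 0" using ceil1 nb by linarith
    then show ?thesis using T_ge by linarith
  qed
  have fin_s: "finite (set_pmf (schedule_pmf b T :: (nat \<Rightarrow> 'n set) pmf))"
    unfolding schedule_pmf_def
    by (rule finite_subset[OF set_Pi_pmf_subset']) (auto intro!: finite_PiE_dflt simp: S.fin_batch)
  have int_s: "integrable (measure_pmf (schedule_pmf b T)) f" for f :: "(nat \<Rightarrow> 'n set) \<Rightarrow> real"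
    by (rule integrable_measure_pmf_finite[OF fin_s])
  have box_ab: "S.box (?ab As)" for As
    unfolding S.box_def alpha_bar_def
    using box_avg[OF TT, of "?it As"] S.box_iter[of As] by (auto simp: S.box_def)
  have part1: "?E (\<lambda>As. ?P (?w (?ab As))) - ?P wstar \<le> ?E (\<lambda>As. ?P (?w (?ab As)) - ?D (?ab As))"
  proof -
    have "?E (\<lambda>As. ?D (?ab As)) \<le> ?E (\<lambda>_. ?P wstar)"
      by (rule exp_mono_pmf[OF fin_s]) (rule S.weak_duality[OF box_ab])
    then show ?thesis by (simp add: int_s)
  qed
  define L where "L = real (T - T0)"
  have Lp: "L > 0" unfolding L_def using TT by simp
  have cardS: "card {T0..<T} = T - T0" by simp
  have "?E (\<lambda>As. ?P (?w (?ab As)) - ?D (?ab As)) \<le> ?E (\<lambda>As. (1 / L) * (\<Sum>t\<in>{T0..<T}. ?P (?w (?it As t)) - ?D (?it As t)))"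
  proof (rule exp_mono_pmf[OF fin_s])
    fix As
    have "?ab As = (\<lambda>i. (1 / real (card {T0..<T})) * (\<Sum>t\<in>{T0..<T}. ?it As t i))"
      unfolding alpha_bar_def cardS by simp
    then show "?P (?w (?ab As)) - ?D (?ab As) \<le> (1 / L) * (\<Sum>t\<in>{T0..<T}. ?P (?w (?it As t)) - ?D (?it As t))"
      using S.gap_avg[of "{T0..<T}" "?it As"] TT unfolding L_def cardS by simp
  qed
  also have "\<dots> = (1 / L) * (\<Sum>t\<in>{T0..<T}. S.Eg t)"
  proof -
    have "?E (\<lambda>As. ?P (?w (?it As t)) - ?D (?it As t)) = S.Eg t" if "t \<in> {T0..<T}" for t
    proof -
      have "S.Eg t = measure_pmf.expectation (map_pmf (\<lambda>As. ?it As t) (schedule_pmf b T)) (\<lambda>a. ?P (?w a) - ?D a)"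
        unfolding S.Eg_def using S.marg_T[of t T] that by simp
      then show ?thesis by simp
    qed
    then show ?thesis
      by (simp add: int_s Bochner_Integration.integral_sum)
  qed
  also have "\<dots> \<le> eps"
  proof -
    define r where "r = real b / n"
    define K0 where "K0 = beta / (2 * lam * n)"
    have r01: "0 < r" "r \<le> 1" unfolding r_def using bpos npos b_range n_def by auto
    have K0p: "0 < K0" unfolding K0_def using beta_pos lam_pos npos by simp
    let ?e = "\<lambda>t. ?P wstar - S.Ed t"
    have rec: "?e (Suc t) \<le> ?e t - r * (s * S.Eg t - s\<^sup>2 * K0)" if "0 \<le> s" "s \<le> 1" for t s
      using S.Ed_step[OF that, of t] unfolding r_def K0_def n_def by (simp add: mult.assoc)
    have ge: "?e t \<le> S.Eg t" for t using S.Eg_ge[OF wstar_min] .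
    have nn: "0 \<le> ?e t" for t using S.Ed_le[of t wstar] by simp
    have e0: "?e 0 \<le> 1" using wstar_min S.P0 S.Ed0 by (metis diff_zero)
    have ex: "(1 - r) ^ t0 \<le> K0"
    proof -
      have "(1 - r) ^ t0 \<le> exp (- r) ^ t0"
        using r01 exp_ge_add_one_self[of "- r"] by (intro power_mono) auto
      also have "\<dots> = exp (- (r * real t0))" by (simp add: exp_of_nat_mult[symmetric] mult.commute)
      also have "\<dots> \<le> exp (ln K0)"
      proof -
        have "ln (2 * lam * n / beta) \<le> r * real t0"
        proof -
          have "ceiling (n / real b * ln (2 * lam * n / beta)) \<le> int t0" using t0_ge by simp
          then have "n / real b * ln (2 * lam * n / beta) \<le> real t0" by (simp add: ceiling_le_iff)
          then have "real b / n * (n / real b * ln (2 * lam * n / beta)) \<le> real b / n * real t0"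
            using r01 unfolding r_def by (intro mult_left_mono) auto
          then show ?thesis using npos bpos unfolding r_def by simp
        qed
        moreover have "ln (2 * lam * n / beta) = - ln K0"
          unfolding K0_def using lam_pos npos beta_pos by (simp add: ln_div ln_mult)
        ultimately show ?thesis by simp
      qed
      also have "\<dots> = K0" using K0p by simp
      finally show ?thesis .
    qed
    have T0t0: "t0 \<le> T0"
    proof -
      have "0 \<le> beta / real b * max 0 (4 / (lam * eps) - 2 * n / beta)" using beta_pos bpos by simp
      then show ?thesis using T0_ge by linarith
    qed
    have c1: "4 * K0 / (2 + r * (real T0 - real t0)) \<le> eps / 2"
    proof -
      have "beta / real b * (4 / (lam * eps) - 2 * n / beta) \<le> beta / real b * max 0 (4 / (lam * eps) - 2 * n / beta)"
        using beta_pos bpos by (intro mult_left_mono) auto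
      then have "beta / real b * (4 / (lam * eps) - 2 * n / beta) \<le> real T0 - real t0" using T0_ge by linarith
      then have "r * (beta / real b * (4 / (lam * eps) - 2 * n / beta)) \<le> r * (real T0 - real t0)"
        using r01 by (intro mult_left_mono) auto
      moreover have "r * (beta / real b * (4 / (lam * eps) - 2 * n / beta)) = 8 * K0 / eps - 2"
        unfolding r_def K0_def using bpos npos beta_pos lam_pos eps_pos by (simp add: field_simps)
      ultimately have X: "8 * K0 / eps \<le> 2 + r * (real T0 - real t0)" by simp
      have Xp: "0 < 8 * K0 / eps" using K0p eps_pos by simp
      have Xpos: "0 < 2 + r * (real T0 - real t0)" using X Xp by linarith
      have "4 * K0 / (2 + r * (real T0 - real t0)) \<le> 4 * K0 / (8 * K0 / eps)"
        by (rule divide_left_mono[OF X]) (use K0p mult_pos_pos[OF Xpos Xp] in auto)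
      also have "\<dots> = eps / 2" using K0p eps_pos by simp
      finally show ?thesis .
    qed
    have TT1: "1 \<le> r * real (T - T0)"
    proof -
      have LL: "L = real T - real T0" unfolding L_def using TT by (simp add: of_nat_diff)
      have m: "real_of_int (ceiling (n / real b)) \<le> max (real_of_int (ceiling (n / real b))) (beta / real b * (1 / (lam * eps)))" by (rule max.cobounded1)
      have "n / real b \<le> L" using T_ge ceil1 m LL by linarith
      then have "r * (n / real b) \<le> r * L" using r01 by (intro mult_left_mono) auto
      then show ?thesis unfolding r_def L_def using npos bpos TT by (simp add: of_nat_diff)
    qed
    have c2: "K0 / (r * real (T - T0)) \<le> eps / 2"
    proof -
      have LL: "L = real T - real T0" unfolding L_def using TT by (simp add: of_nat_diff)
      have m: "beta / real b * (1 / (lam * eps)) \<le> max (real_of_int (ceiling (n / real b))) (beta / real b * (1 / (lam * eps)))" by (rule max.cobounded2)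
      have "beta / real b * (1 / (lam * eps)) \<le> L" using T_ge m LL by linarith
      then have "r * (beta / real b * (1 / (lam * eps))) \<le> r * L" using r01 by (intro mult_left_mono) auto
      moreover have "r * (beta / real b * (1 / (lam * eps))) = 2 * K0 / eps"
        unfolding r_def K0_def using bpos npos beta_pos lam_pos eps_pos by (simp add: field_simps)
      ultimately have X: "2 * K0 / eps \<le> r * L" by simp
      have Xp: "0 < 2 * K0 / eps" using K0p eps_pos by simp
      have Xpos: "0 < r * L" using X Xp by linarith
      have "K0 / (r * L) \<le> K0 / (2 * K0 / eps)"
        by (rule divide_left_mono[OF X]) (use K0p mult_pos_pos[OF Xpos Xp] in auto)
      also have "\<dots> = eps / 2" using K0p eps_pos by simp
      finally show ?thesis unfolding L_def .
    qed
    show ?thesis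
      using rate[OF r01 K0p rec ge nn e0 ex T0t0 c1 TT TT1 c2] unfolding L_def by simp
  qed
  finally show ?thesis using part1 by simp
qed

end
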